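(* For every integer $k\geq 0$, $$d_{\mathcal F}\!\left(\frac{F_{k+1}}{F_k},\,\infty\right)=\lfloor k/2\rfloor+1,$$ where $(F_j)$ are the Fibonacci numbers indexed so that $F_0=F_1=1$ and $F_{j+1}=F_j+F_{j-1}$ (so $\frac{F_{k+1}}{F_k}=\frac11,\frac21,\frac32,\frac53,\dots$ for $k=0,1,2,3,\dots$), and $\infty=\frac10$.
   Context: The Farey graph has vertex set $\mathbb Q\cup\{\infty\}$, where each element is written in lowest terms $\frac ab$ ($\infty=\frac10$), and an edge between $\frac ab$ and $\frac cd$ exactly when $|ad-bc|=1$. (Equivalently, vertices are slopes of a torus, adjacent when they have representatives meeting transversely in one point.) $d_{\mathcal F}$ denotes the path-length distance in the Farey graph. *)

theory Defs
  imports Complex_Main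
begin

text \<open>Vertices of the Farey graph: \<open>Q \<union> {\<infinity>}\<close>, encoded as \<open>rat option\<close>
  with \<open>None\<close> playing the role of \<open>\<infinity> = 1/0\<close>.\<close>
type_synonym farey_vertex = "rat option"

abbreviation farey_inf :: farey_vertex where "farey_inf \<equiv> None"

definition farey_rep :: "farey_vertex \<Rightarrow> int \<times> int" where
  "farey_rep v = (case v of None \<Rightarrow> (1, 0) | Some q \<Rightarrow> quotient_of q)"

definition farey_adj :: "farey_vertex \<Rightarrow> farey_vertex \<Rightarrow> bool" where
  "farey_adj u v = (case farey_rep u of (a, b) \<Rightarrow> case farey_rep v of (c, d) \<Rightarrow>
      \<bar>a * d - b * c\<bar> = 1)"

definition farey_dist :: "farey_vertex \<Rightarrow> farey_vertex \<Rightarrow> nat" where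
  "farey_dist u v = (LEAST n. (farey_adj ^^ n) u v)"

fun F :: "nat \<Rightarrow> nat" where
  "F 0 = 1"
| "F (Suc 0) = 1"
| "F (Suc (Suc n)) = F (Suc n) + F n"

end

theory Submission
  imports Defs
begin

lemma qrep:
  assumes "b > 0" "coprime a b"
  shows "quotient_of (of_int a / of_int b) = (a, b)"
  using assms by (simp add: Fract_of_int_quotient[symmetric] quotient_of_Fract normalize_def)

lemma F_pos: "F k > 0"
  by (induction k rule: F.induct) auto

lemma F_coprime: "coprime (F (Suc k)) (F k)"
proof (induction k)
  case 0 then show ?case by simp
next
  case (Suc k)
  have "gcd (F (Suc k)) (F (Suc k) + F k) = gcd (F (Suc k)) (F k)" by (rule gcd_add2)
  then show ?case using Suc by (simp add: coprime_iff_gcd_eq_1 add.commute gcd.commute)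
qed

lemma G_id: "int (F (k+3)) * int (F k) - int (F (k+2)) * int (F (k+1)) = (-1)^k"
proof (induction k)
  case 0 then show ?case by (simp add: numeral_eq_Suc)
next
  case (Suc k)
  have e: "F (Suc k + 3) = F (k+3) + F (k+2)" "F (k+3) = F (k+2) + F (k+1)"
    "F (k+2) = F (k+1) + F k" by (simp_all add: numeral_eq_Suc)
  show ?case using Suc by (simp add: e(1) numeral_eq_Suc e(2)[simplified numeral_eq_Suc] algebra_simps) 
qed

lemma H_id: "int (F (k+2)) * int (F k) - int (F (k+1))^2 = (-1)^k"
proof (induction k)
  case 0 then show ?case by (simp add: numeral_eq_Suc)
next
  case (Suc k)
  show ?case using Suc by (simp add: numeral_eq_Suc algebra_simps power2_eq_square)
qed

lemma fr_less:
  assumes "b > 0" "d > 0"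
  shows "(of_int a / of_int b < (of_int c / of_int d :: rat)) = (a*d < c*b)"
proof -
  have "(of_int a / of_int b < (of_int c / of_int d :: rat)) = (of_int a * of_int d < (of_int c * of_int b :: rat))"
    using assms by (simp add: field_simps)
  also have "\<dots> = (a*d < c*b)" by (metis of_int_less_iff of_int_mult)
  finally show ?thesis .
qed

lemma step:
  fixes p q r s :: int and t :: rat
  assumes q: "q > 0" and s: "s > 0" and det: "q*r - p*s = 1"
    and lo: "of_int p / of_int q < t" and hi: "t < of_int r / of_int s"
    and adj: "farey_adj (Some t) w"
  shows "\<exists>u. w = Some u \<and> of_int p / of_int q \<le> u \<and> u \<le> of_int r / of_int s"
proof -
  obtain x y where qt: "quotient_of t = (x,y)" by force
  have y: "y > 0" using quotient_of_denom_pos[OF qt] .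
  have tdef: "t = of_int x / of_int y" using quotient_of_div[OF qt] .
  have l1: "p*y < x*q" using lo fr_less[OF q y] tdef by simp
  have l2: "x*s < r*y" using hi fr_less[OF y s] tdef by simp
  define \<alpha> where "\<alpha> = r*y - s*x"
  define \<beta> where "\<beta> = q*x - p*y"
  have a1: "\<alpha> \<ge> 1" using l2 by (simp add: \<alpha>_def algebra_simps)
  have b1: "\<beta> \<ge> 1" using l1 by (simp add: \<beta>_def algebra_simps)
  have ex: "\<alpha>*p + \<beta>*r = x*(q*r - p*s)" by (simp add: \<alpha>_def \<beta>_def algebra_simps)
  have ey: "\<alpha>*q + \<beta>*s = y*(q*r - p*s)" by (simp add: \<alpha>_def \<beta>_def algebra_simps)
  have ex': "x = \<alpha>*p + \<beta>*r" using ex det by simp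
  have ey': "y = \<alpha>*q + \<beta>*s" using ey det by simp
  have aq: "\<alpha>*q \<ge> 1*1" by (rule mult_mono) (use a1 q in auto)
  have bs: "\<beta>*s \<ge> 1*1" by (rule mult_mono) (use b1 s in auto)
  show ?thesis
  proof (cases w)
    case None
    then have "\<bar>x*0 - y*1\<bar> = 1" using adj qt by (simp add: farey_adj_def farey_rep_def)
    then have "y = 1" using y by simp
    then show ?thesis using aq bs ey' by simp
  next
    case (Some u)
    obtain c d where qu: "quotient_of u = (c,d)" by force
    have d: "d > 0" using quotient_of_denom_pos[OF qu] .
    have udef: "u = of_int c / of_int d" using quotient_of_div[OF qu] .
    have ad: "\<bar>x*d - y*c\<bar> = 1" using adj qt qu Some by (simp add: farey_adj_def farey_rep_def)
    have pr: "p*s < r*q" using det by (simp add: mult.commute)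
    have key: "c*y - d*x = \<alpha>*(c*q - d*p) + \<beta>*(c*s - d*r)"
      by (simp add: ex' ey' algebra_simps)
    have c1: "\<not> u < of_int p / of_int q"
    proof
      assume "u < of_int p / of_int q"
      then have A: "c*q < p*d" using fr_less[OF d q] udef by simp
      then have "of_int c / of_int d < (of_int r / of_int s :: rat)"
        using \<open>u < _\<close> udef less_trans fr_less[OF q s] pr by (metis)
      then have B: "c*s < r*d" using fr_less[OF d s] by simp
      have "\<alpha>*(c*q - d*p) \<le> \<alpha>*(-1)" by (rule mult_left_mono) (use A a1 in \<open>auto simp: algebra_simps\<close>)
      moreover have "\<beta>*(c*s - d*r) \<le> \<beta>*(-1)" by (rule mult_left_mono) (use B b1 in \<open>auto simp: algebra_simps\<close>)
      ultimately have "c*y - d*x \<le> -2" using key a1 b1 by linarith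
      then show False using ad by (simp add: algebra_simps abs_if split: if_splits)
    qed
    have c2: "\<not> u > of_int r / of_int s"
    proof
      assume "u > of_int r / of_int s"
      then have B: "r*d < c*s" using fr_less[OF s d] udef by simp
      then have "of_int c / of_int d > (of_int p / of_int q :: rat)"
        using \<open>u > _\<close> udef less_trans fr_less[OF q s] pr by (metis)
      then have A: "p*d < c*q" using fr_less[OF q d] by simp
      have "\<alpha>*(c*q - d*p) \<ge> \<alpha>*1" by (rule mult_left_mono) (use A a1 in \<open>auto simp: algebra_simps\<close>)
      moreover have "\<beta>*(c*s - d*r) \<ge> \<beta>*1" by (rule mult_left_mono) (use B b1 in \<open>auto simp: algebra_simps\<close>)
      ultimately have "c*y - d*x \<ge> 2" using key a1 b1 by linarith
      then show False using ad by (simp add: algebra_simps abs_if split: if_splits)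
    qed
    show ?thesis using c1 c2 Some by auto
  qed
qed


lemma sep:
  fixes p q r s :: int
  assumes q: "q > 0" and s: "s > 0" and det: "q*r - p*s = 1"
  shows "(farey_adj^^n) (Some t) None \<Longrightarrow> of_int p / of_int q < t \<Longrightarrow> t < of_int r / of_int s \<Longrightarrow>
    \<exists>m<n. (farey_adj^^m) (Some (of_int p / of_int q)) None \<or> (farey_adj^^m) (Some (of_int r / of_int s)) None"
proof (induction n arbitrary: t)
  case 0
  then show ?case by simp
next
  case (Suc n)
  from relpowp_Suc_D2[OF Suc.prems(1)] obtain w where w: "farey_adj (Some t) w" "(farey_adj^^n) w None"
    by blast
  from step[OF q s det Suc.prems(2,3) w(1)] obtain u where
    u: "w = Some u" "of_int p / of_int q \<le> u" "u \<le> of_int r / of_int s" by blast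
  show ?case
  proof (cases "u = of_int p / of_int q \<or> u = of_int r / of_int s")
    case True
    then show ?thesis using w(2) u(1) by auto
  next
    case False
    then have "of_int p / of_int q < u" "u < of_int r / of_int s" using u by auto
    from Suc.IH[OF w(2)[unfolded u(1)] this] show ?thesis using less_SucI by blast
  qed
qed

definition Xr :: "nat \<Rightarrow> rat" where
  "Xr k = of_int (int (F (Suc k))) / of_int (int (F k))"

lemma rep_X: "farey_rep (Some (Xr k)) = (int (F (Suc k)), int (F k))"
  unfolding farey_rep_def Xr_def
  using qrep[of "int (F k)" "int (F (Suc k))"] F_pos[of k] F_coprime[of k]
  by (simp add: coprime_int_iff)

lemma adj_inf: "k < 2 \<Longrightarrow> farey_adj (Some (Xr k)) None"
  unfolding farey_adj_def using rep_X[of k]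
  by (cases k; cases "k - 1") (auto simp: farey_rep_def)

lemma adj2: "farey_adj (Some (Xr (Suc (Suc k)))) (Some (Xr k))"
proof -
  have "\<bar>int (F (k+3)) * int (F k) - int (F (k+2)) * int (F (k+1))\<bar> = 1"
    using G_id[of k] by simp
  then show ?thesis unfolding farey_adj_def using rep_X[of k] rep_X[of "Suc (Suc k)"]
    by (simp add: numeral_eq_Suc)
qed

lemma upper: "(farey_adj^^(k div 2 + 1)) (Some (Xr k)) None"
proof (induction k rule: F.induct)
  case 1
  have "(farey_adj ^^ Suc 0) (Some (Xr 0)) None" using relpowp_Suc_I2[of farey_adj, OF adj_inf[of 0] relpowp_0_I] by simp
  then show ?case by simp
next
  case 2
  have "(farey_adj ^^ Suc 0) (Some (Xr 1)) None" using relpowp_Suc_I2[of farey_adj, OF adj_inf[of 1] relpowp_0_I] by simp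
  then show ?case by simp
next
  case (3 n)
  have "Suc (Suc n) div 2 + 1 = Suc (n div 2 + 1)" by simp
  then show ?case using relpowp_Suc_I2[OF adj2[of n] "3.IH"(2)] by simp
qed


lemma G': "int (F (Suc (Suc (Suc j)))) * int (F j) - int (F (Suc (Suc j))) * int (F (Suc j)) = (-1)^j"
  using G_id[of j] by (simp add: numeral_eq_Suc)

lemma H': "int (F (Suc (Suc j))) * int (F j) - int (F (Suc j)) * int (F (Suc j)) = (-1)^j"
  using H_id[of j] by (simp add: numeral_eq_Suc power2_eq_square)

lemma lower: "(farey_adj^^n) (Some (Xr k)) None \<Longrightarrow> k div 2 + 1 \<le> n"
proof (induction k arbitrary: n rule: less_induct)
  case (less k)
  show ?case
  proof (cases "k < 2")
    case True
    have "n \<noteq> 0" using less.prems by (cases n) auto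
    then show ?thesis using True by simp
  next
    case False
    then obtain j where k: "k = Suc (Suc j)" by (metis add_2_eq_Suc le_add_diff_inverse not_less)
    have pos: "int (F j) > 0" "int (F (Suc j)) > 0" "int (F (Suc (Suc j))) > 0"
      using F_pos[of j] F_pos[of "Suc j"] F_pos[of "Suc (Suc j)"] by (simp_all only: of_nat_0_less_iff)
    have h1: "int (F (Suc (Suc (Suc j)))) * int (F (Suc j)) - int (F (Suc (Suc j))) * int (F (Suc (Suc j))) = - ((-1)^j)"
      using H'[of "Suc j"] by simp
    have g: "int (F (Suc (Suc (Suc j)))) * int (F j) - int (F (Suc (Suc j))) * int (F (Suc j)) = (-1)^j"
      using G' .
    have h0: "int (F (Suc (Suc j))) * int (F j) - int (F (Suc j)) * int (F (Suc j)) = (-1)^j"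
      using H' .
    have xk: "Xr k = of_int (int (F (Suc (Suc (Suc j))))) / of_int (int (F (Suc (Suc j))))"
      by (simp add: Xr_def k)
    note cms = mult.commute[of "int (F (Suc j))" "int (F (Suc (Suc j)))"]
      mult.commute[of "int (F (Suc (Suc (Suc j))))" "int (F j)"]
      mult.commute[of "int (F (Suc (Suc (Suc j))))" "int (F (Suc j))"]
      mult.commute[of "int (F (Suc j))" "int (F j)"]
      mult.commute[of "int (F (Suc (Suc j)))" "int (F j)"]
    have ex: "\<exists>m<n. (farey_adj^^m) (Some (Xr j)) None \<or> (farey_adj^^m) (Some (Xr (Suc j))) None"
    proof (cases "even j")
      case True
      have det: "int (F j) * int (F (Suc (Suc j))) - int (F (Suc j)) * int (F (Suc j)) = 1"
        using h0 True by (simp only: mult.commute) simp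
      have sg: "(-1::int)^j = 1" using True by simp
      have lo: "of_int (int (F (Suc j))) / of_int (int (F j)) < Xr k"
        unfolding xk by (subst fr_less[OF pos(1) pos(3)]) (use g sg cms in linarith)
      have hi: "Xr k < of_int (int (F (Suc (Suc j)))) / of_int (int (F (Suc j)))"
        unfolding xk by (subst fr_less[OF pos(3) pos(2)]) (use h1 sg cms in linarith)
      from sep[OF pos(1) pos(2) det less.prems lo hi] show ?thesis
        by (auto simp: Xr_def)
    next
      case False
      have det: "int (F (Suc j)) * int (F (Suc j)) - int (F (Suc (Suc j))) * int (F j) = 1"
        using h0 False by (simp only: mult.commute) simp
      have sg: "(-1::int)^j = -1" using False by simp
      have lo: "of_int (int (F (Suc (Suc j)))) / of_int (int (F (Suc j))) < Xr k"
        unfolding xk by (subst fr_less[OF pos(2) pos(3)]) (use h1 sg cms in linarith)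
      have hi: "Xr k < of_int (int (F (Suc j))) / of_int (int (F j))"
        unfolding xk by (subst fr_less[OF pos(3) pos(1)]) (use g sg cms in linarith)
      from sep[OF pos(2) pos(1) det less.prems lo hi] show ?thesis
        by (auto simp: Xr_def)
    qed
    then obtain m where m: "m < n" "(farey_adj^^m) (Some (Xr j)) None \<or> (farey_adj^^m) (Some (Xr (Suc j))) None"
      by blast
    have "j div 2 + 1 \<le> m"
    proof -
      have "j < k" "Suc j < k" using k by auto
      then show ?thesis using m(2) less.IH[of j m] less.IH[of "Suc j" m] by auto
    qed
    then show ?thesis using m(1) k by simp
  qed
qed

theorem lemma4p5:
  fixes k :: nat
  shows "farey_dist (Some (of_nat (F (k + 1)) / of_nat (F k))) farey_inf = k div 2 + 1"
proof -
  have e: "(of_nat (F (k + 1)) / of_nat (F k) :: rat) = Xr k" by (simp add: Xr_def)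
  show ?thesis unfolding e farey_dist_def
    apply (rule Least_equality[where P="\<lambda>n. (farey_adj^^n) (Some (Xr k)) None"])
     apply (rule upper)
    apply (erule lower)
    done
qed

end
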